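(* Let $k\ge 2$, $l,m\ge 1$, and let $\Gamma=K_{1,k-1}[K_l,K_m,\dots,K_m]$ (with $K_l$ replacing the center of the star and $K_m$ replacing each of the $k-1$ leaves), so $\Gamma$ has $n=l+(k-1)m$ vertices. Let $d_1=n-1$, $d_2=l+m-1$, and \[y_{1,2}=\tfrac12\Big[(l-1)d_1\sqrt2+(m-1)d_2\sqrt2\pm\sqrt{\big[(l-1)d_1\sqrt2-(m-1)d_2\sqrt2\big]^2+4lm(k-1)(d_1^2+d_2^2)}\Big].\] Then the Sombor spectrum of $\Gamma$ (eigenvalues of its Sombor matrix with multiplicities) consists of $-(n-1)\sqrt2$ with multiplicity $l-1$, $-(l+m-1)\sqrt2$ with multiplicity $mk-k-m+1$, $(m-1)(l+m-1)\sqrt2$ with multiplicity $k-2$, and $y_1$, $y_2$ each with multiplicity $1$ (multiplicities adding up when values coincide).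
   Context: All graphs are finite, simple and undirected. For a graph $\Gamma$ with vertices $u_1,\dots,u_N$, the Sombor matrix $S(\Gamma)$ is the $N\times N$ matrix whose $(i,j)$ entry is $\sqrt{\deg(u_i)^2+\deg(u_j)^2}$ if $u_i$ and $u_j$ are adjacent and $0$ otherwise; its eigenvalues with multiplicities form the Sombor spectrum. $K_r$ is the complete graph on $r$ vertices and $K_{1,k-1}$ is the star with center $u_1$ and leaves $u_2,\dots,u_k$. For a graph $H$ with vertices $u_1,\dots,u_k$ and pairwise disjoint graphs $\Gamma_1,\dots,\Gamma_k$, the generalized join $H[\Gamma_1,\dots,\Gamma_k]$ is obtained by replacing each $u_i$ by $\Gamma_i$ and joining every vertex of $\Gamma_i$ to every vertex of $\Gamma_j$ whenever $u_i$ is adjacent to $u_j$ in $H$. *)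

theory Defs
  imports "Jordan_Normal_Form.Char_Poly" "HOL-Library.Multiset"
begin

text \<open>A finite simple graph is represented by a pair (N, E): vertices 0..<N and an
adjacency relation E (only used on vertices < N; symmetric and irreflexive).\<close>
type_synonym graph = "nat \<times> (nat \<Rightarrow> nat \<Rightarrow> bool)"

definition gsize :: "graph \<Rightarrow> nat" where "gsize G = fst G"

definition adj :: "graph \<Rightarrow> nat \<Rightarrow> nat \<Rightarrow> bool" where
  "adj G i j \<longleftrightarrow> i < gsize G \<and> j < gsize G \<and> snd G i j"

definition simple_graph :: "graph \<Rightarrow> bool" where
  "simple_graph G \<longleftrightarrow> (\<forall>i j. adj G i j \<longrightarrow> adj G j i) \<and> (\<forall>i. \<not> adj G i i)"

definition gdeg :: "graph \<Rightarrow> nat \<Rightarrow> nat" where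
  "gdeg G i = card {j. j < gsize G \<and> adj G i j}"

definition sombor_matrix :: "graph \<Rightarrow> real mat" where
  "sombor_matrix G = mat (gsize G) (gsize G)
     (\<lambda>(i,j). if adj G i j then sqrt (real (gdeg G i)^2 + real (gdeg G j)^2) else 0)"

text \<open>The Sombor spectrum (eigenvalues with multiplicities) is the multiset M of roots of
the characteristic polynomial, i.e. char_poly S = prod over M of (x - lambda).\<close>
definition sombor_spectrum_is :: "graph \<Rightarrow> real multiset \<Rightarrow> bool" where
  "sombor_spectrum_is G M \<longleftrightarrow>
     char_poly (sombor_matrix G) = (\<Prod>x\<in>#M. [:- x, 1:])"

definition complete_graph :: "nat \<Rightarrow> graph" where
  "complete_graph r = (r, \<lambda>i j. i \<noteq> j)"

definition star_graph :: "nat \<Rightarrow> graph" where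
  "star_graph k = (k, \<lambda>i j. (i = 0 \<and> j \<noteq> 0) \<or> (j = 0 \<and> i \<noteq> 0))"

text \<open>Generalized join H[G_0,...,G_{k-1}]: the vertices of G_i form the block
[off i, off (i+1)) of the new vertex set.\<close>
definition join_off :: "graph list \<Rightarrow> nat \<Rightarrow> nat" where
  "join_off Gs i = (\<Sum>t<i. gsize (Gs ! t))"

definition gen_join :: "graph \<Rightarrow> graph list \<Rightarrow> graph" where
  "gen_join H Gs = (join_off Gs (length Gs),
     \<lambda>v w. \<exists>i<length Gs. \<exists>j<length Gs.
        join_off Gs i \<le> v \<and> v < join_off Gs (Suc i) \<and>
        join_off Gs j \<le> w \<and> w < join_off Gs (Suc j) \<and>
        ((i = j \<and> adj (Gs ! i) (v - join_off Gs i) (w - join_off Gs i)) \<or>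
         (i \<noteq> j \<and> adj H i j)))"

end

theory Submission
  imports Defs
begin

lemma det_mat0: "det (mat 0 0 f :: 'a :: comm_ring_1 mat) = 1"
  by (simp add: det_def')
lemma det_mat1: "det (mat 1 1 f :: 'a :: comm_ring_1 mat) = f (0,0)"
proof -
  have "det (mat 1 1 f) = (\<Sum>j<1. mat 1 1 f $$ (0,j) * cofactor (mat 1 1 f) 0 j)"
    by (rule laplace_expansion_row) auto
  also have "mat_delete (mat 1 1 f) 0 0 = mat 0 0 (\<lambda>_. 0)" by (auto simp: mat_delete_def)
  hence "cofactor (mat 1 1 f) 0 0 = 1" by (simp add: cofactor_def det_mat0)
  ultimately show ?thesis by simp
qed
lemma det_mat2: "det (mat 2 2 f :: 'a :: comm_ring_1 mat) = f (0,0) * f(1,1) - f (0,1) * f (1,0)"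
proof -
  have "det (mat 2 2 f) = (\<Sum>j<2. mat 2 2 f $$ (0,j) * cofactor (mat 2 2 f) 0 j)"
    by (rule laplace_expansion_row) auto
  also have "mat_delete (mat 2 2 f) 0 0 = mat 1 1 (\<lambda>_. f (1,1))" by (auto simp: mat_delete_def)
  hence "cofactor (mat 2 2 f) 0 0 = f (1,1)" using det_mat1[of "\<lambda>_. f (1,1)"] by (simp add: cofactor_def)
  moreover have "mat_delete (mat 2 2 f) 0 1 = mat 1 1 (\<lambda>_. f (1,0))" by (auto simp: mat_delete_def)
  hence "cofactor (mat 2 2 f) 0 1 = - f (1,0)" using det_mat1[of "\<lambda>_. f (1,0)"] by (simp add: cofactor_def)
  ultimately show ?thesis by (simp add: numeral_2_eq_2)
qed


lemma quotient_char_poly: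
  fixes K :: "nat \<Rightarrow> nat \<Rightarrow> real" and \<gamma> :: "nat \<Rightarrow> real" and cl :: "nat \<Rightarrow> nat"
  assumes cl: "\<And>i. i < n \<Longrightarrow> cl i < p"
    and ne: "\<And>c. c < p \<Longrightarrow> \<exists>i<n. cl i = c"
  shows "char_poly (mat n n (\<lambda>(i,j). K (cl i) (cl j) + (if i = j then \<gamma> (cl i) else 0))) =
     char_poly (mat p p (\<lambda>(c,d). K c d * real (card {i. i<n \<and> cl i = d}) + (if c = d then \<gamma> c else 0)))
     * (\<Prod>c<p. [:-\<gamma> c, 1:]^(card {i. i<n \<and> cl i = c} - 1))"
proof -
  define A where "A = mat n n (\<lambda>(i,j). K (cl i) (cl j) + (if i = j then \<gamma> (cl i) else 0))"
  define s where "s d = real (card {i. i<n \<and> cl i = d})" for d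
  define B where "B = mat p p (\<lambda>(c,d). K c d * s d + (if c = d then \<gamma> c else 0))"
  define f where "f c = (SOME i. i < n \<and> cl i = c)" for c
  have f: "f c < n \<and> cl (f c) = c" if "c < p" for c 
    using someI_ex[OF ne[OF that]] unfolding f_def by auto
  define R where "R = f ` {..<p}"
  have inj: "inj_on f {..<p}" by (metis f inj_onI lessThan_iff)
  have cardR: "card R = p" using card_image[OF inj] R_def by simp
  have Rsub: "R \<subseteq> {..<n}" using f R_def by auto
  define NR where "NR = {..<n} - R"
  define q where "q = n - p"
  have pn: "p \<le> n" using card_mono[OF _ Rsub] cardR by simp
  have nqp: "n = q + p" using pn q_def by simp
  have finR: "finite R" using R_def by simp
  have cardNR: "card NR = q" using card_Diff_subset[OF finR Rsub] cardR NR_def q_def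
    by simp
  obtain g where g: "bij_betw g {..<q} NR"
    using finite_same_card_bij[of "{..<q}" NR] cardNR NR_def by auto
  have gNR: "g t < n \<and> g t \<notin> R" if "t < q" for t
    using g that unfolding bij_betw_def NR_def by auto
  have ginj: "g t = g t' \<longleftrightarrow> t = t'" if "t<q" "t'<q" for t t'
    using g that unfolding bij_betw_def inj_on_def by auto
  have gf: "g t \<noteq> f c" if "t<q" "c<p" for t c
    using gNR[OF that(1)] that(2) R_def by auto
  have clg: "cl (g t) < p" if "t<q" for t using gNR[OF that] cl by auto
  define P where "P = (mat n n (\<lambda>(i,t). if t < q then (if i = g t then 1 else 0)
      else (if cl i = t - q then 1 else 0)) :: real mat)"
  define Q where "Q = (mat n n (\<lambda>(t,i). if t < q then (if i = g t then 1 else 0) - (if i = f (cl (g t)) then 1 else 0)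
      else (if i = f (t - q) then 1 else 0)) :: real mat)"
  have P: "P \<in> carrier_mat n n" and Q: "Q \<in> carrier_mat n n" and A: "A \<in> carrier_mat n n"
    unfolding P_def Q_def A_def by auto
  have Qsum: "(\<Sum>i=0..<n. Q $$ (t,i) * F i) = (if t < q then F (g t) - F (f (cl (g t)))  else F (f (t - q)))"
    if "t < n" for t F
  proof (cases "t < q")
    case True
    then have "(\<Sum>i=0..<n. Q $$ (t,i) * F i) = (\<Sum>i=0..<n. (if i = g t then F i else 0) - (if i = f (cl (g t)) then F i else 0))"
      using that by (intro sum.cong) (auto simp: Q_def)
    also have "\<dots> = F (g t) - F (f (cl (g t)))"
      using True gNR f clg by (simp add: sum_subtractf)
    finally show ?thesis using True by simp
  next
    case False
    then have "(\<Sum>i=0..<n. Q $$ (t,i) * F i) = (\<Sum>i=0..<n. (if i = f (t - q) then F i else 0))"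
      using that by (intro sum.cong) (auto simp: Q_def)
    also have "\<dots> = F (f (t - q))"
      using False that f[of "t - q"] nqp by simp
    finally show ?thesis using False by simp
  qed
  have AP: "(A * P) $$ (i,t) = (if t < q then A $$ (i, g t) else K (cl i) (t-q) * s (t-q) + (if cl i = t - q then \<gamma> (cl i) else 0))"
    if "i < n" "t < n" for i t
  proof (cases "t < q")
    case True
    have "(A * P) $$ (i,t) = (\<Sum>u=0..<n. A $$ (i,u) * P $$ (u,t))"
      using that A P by (simp add: scalar_prod_def)
    also have "\<dots> = (\<Sum>u=0..<n. if u = g t then A $$ (i,u) else 0)"
      using True that by (intro sum.cong) (auto simp: P_def)
    also have "\<dots> = A $$ (i, g t)" using gNR True by simp
    finally show ?thesis using True by simp
  next
    case False
    define c where "c = t - q"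
    have "(A * P) $$ (i,t) = (\<Sum>u=0..<n. A $$ (i,u) * P $$ (u,t))"
      using that A P by (simp add: scalar_prod_def)
    also have "\<dots> = (\<Sum>u=0..<n. if cl u = c then K (cl i) c + (if i = u then \<gamma> (cl i) else 0) else 0)"
      using False that by (intro sum.cong) (auto simp: P_def A_def c_def)
    also have "\<dots> = (\<Sum>u\<in>{u. u<n \<and> cl u = c}. K (cl i) c + (if i = u then \<gamma> (cl i) else 0))"
      by (simp add: sum.inter_filter[symmetric] atLeast0LessThan)
    also have "\<dots> = K (cl i) c * s c + (\<Sum>u\<in>{u. u<n \<and> cl u = c}. (if i = u then \<gamma> (cl i) else 0))"
      by (simp add: sum.distrib s_def)
    also have "\<dots> = K (cl i) c * s c + (if cl i = c then \<gamma> (cl i) else 0)"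
      using that by simp
    finally show ?thesis using False c_def by simp
  qed
  have QP: "Q * P = 1\<^sub>m n"
  proof (rule eq_matI)
    fix t t' assume tt: "t < dim_row (1\<^sub>m n)" "t' < dim_col (1\<^sub>m n)"
    have "(Q * P) $$ (t,t') = (\<Sum>i=0..<n. Q $$ (t,i) * P $$ (i,t'))"
      using tt Q P by (simp add: scalar_prod_def)
    also have "\<dots> = (if t<q then P$$(g t,t') - P$$(f(cl(g t)),t') else P$$(f(t-q),t'))"
      using tt by (intro Qsum) simp
    also have "\<dots> = 1\<^sub>m n $$ (t,t')"
    proof (cases "t < q")
      case True
      note gt = gNR[OF True] and fc = f[OF clg[OF True]]
      show ?thesis
      proof (cases "t' < q")
        case True2: True
        have "f (cl (g t)) \<noteq> g t'" using gf[OF True2 clg[OF True]] by simp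
        then show ?thesis using True True2 tt gt fc ginj[OF True True2] by (simp add: P_def)
      next
        case False
        then show ?thesis using True tt gt fc by (simp add: P_def)
      qed
    next
      case False
      have tp: "t - q < p" using False tt nqp by simp
      note fc = f[OF tp]
      show ?thesis
      proof (cases "t' < q")
        case True2: True
        have "f (t - q) \<noteq> g t'" using gf[OF True2 tp] by simp
        then show ?thesis using False True2 tt fc by (simp add: P_def)
      next
        case False2: False
        then show ?thesis using False tt fc by (auto simp: P_def)
      qed
    qed
    finally show "(Q * P) $$ (t,t') = 1\<^sub>m n $$ (t,t')" .
  qed (use Q P in auto)
  have PQ: "P * Q = 1\<^sub>m n" using mat_mult_left_right_inverse[OF Q P QP] .
  define T where "T = Q * (A * P)"
  define Dm where "Dm = mat q q (\<lambda>(t,t'). if t = t' then \<gamma> (cl (g t)) else 0)"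
  define Y where "Y = mat p q (\<lambda>(c,t'). A $$ (f c, g t'))"
  have T: "T = four_block_mat Dm (0\<^sub>m q p) Y B"
  proof (rule eq_matI)
    fix t t' assume tt: "t < dim_row (four_block_mat Dm (0\<^sub>m q p) Y B)" "t' < dim_col (four_block_mat Dm (0\<^sub>m q p) Y B)"
    then have tn: "t < n" "t' < n" using nqp by (auto simp: Dm_def B_def)
    have fb: "four_block_mat Dm (0\<^sub>m q p) Y B $$ (t,t') = (if t<q then if t'<q then Dm$$(t,t') else 0 
        else if t'<q then Y$$(t-q,t') else B$$(t-q,t'-q))"
      using tn nqp by (simp add: Dm_def B_def)
    have "T $$ (t,t') = (\<Sum>i=0..<n. Q $$ (t,i) * (A * P) $$ (i,t'))"
      using tn Q P A by (simp add: scalar_prod_def T_def)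
    also have "\<dots> = (if t<q then (A*P)$$(g t,t') - (A*P)$$(f(cl(g t)),t') else (A*P)$$(f(t-q),t'))"
      using tn by (intro Qsum) simp
    also have "\<dots> = four_block_mat Dm (0\<^sub>m q p) Y B $$ (t,t')"
    proof (cases "t < q")
      case True
      note gt = gNR[OF True] and fc = f[OF clg[OF True]]
      show ?thesis
      proof (cases "t' < q")
        case True2: True
        have "f (cl (g t)) \<noteq> g t'" using gf[OF True2 clg[OF True]] by simp
        moreover have "g t' < n" using gNR[OF True2] by simp
        moreover have "(A*P)$$(g t,t') = A$$(g t, g t')" "(A*P)$$(f(cl(g t)),t') = A$$(f(cl(g t)), g t')"
          using AP True2 tn gt fc by auto
        ultimately show ?thesis using True True2 tn gt fc ginj[OF True True2] fb
          by (simp add: Dm_def A_def)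
      next
        case False
        then show ?thesis using True tn gt fc AP fb by auto
      qed
    next
      case False
      have tp: "t - q < p" using False tn nqp by simp
      note fc = f[OF tp]
      show ?thesis
      proof (cases "t' < q")
        case True2: True
        then show ?thesis using False True2 tn fc fb tp by (simp add: AP Y_def)
      next
        case False2: False
        have "t' - q < p" using False2 tn nqp by simp
        then show ?thesis using False False2 tn fc nqp fb by (auto simp: AP Dm_def B_def)
      qed
    qed
    finally show "T $$ (t,t') = four_block_mat Dm (0\<^sub>m q p) Y B $$ (t,t')" .
  qed (use Q P A nqp in \<open>auto simp: T_def Dm_def B_def\<close>)
  have APc: "A*P \<in> carrier_mat n n" by (rule mult_carrier_mat[OF A P])
  have Tc: "T \<in> carrier_mat n n" unfolding T_def by (rule mult_carrier_mat[OF Q APc])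
  have PTQ: "P * T * Q = A"
  proof -
    have "P * T = P * Q * (A * P)" unfolding T_def by (rule assoc_mult_mat[OF P Q APc, symmetric])
    also have "\<dots> = A * P" using PQ left_mult_one_mat[OF APc] by simp
    finally have "P * T * Q = A * P * Q" by simp
    also have "\<dots> = A * (P * Q)" by (rule assoc_mult_mat[OF A P Q])
    also have "\<dots> = A" using PQ A by simp
    finally show ?thesis .
  qed
  have dA: "dim_row A = n" using A by simp
  have "similar_mat_wit A T P Q" unfolding similar_mat_wit_def Let_def dA
  proof (intro conjI)
    show "{A, T, P, Q} \<subseteq> carrier_mat n n" using A Tc P Q by simp
  qed (use PQ QP PTQ in simp_all)
  then have sim: "similar_mat A T" unfolding similar_mat_def by blast
  have Dmc: "Dm \<in> carrier_mat q q" and Bc: "B \<in> carrier_mat p p" and Yc: "Y \<in> carrier_mat p q"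
    unfolding Dm_def B_def Y_def by auto
  have cpmT: "char_poly_matrix T = four_block_mat (char_poly_matrix Dm) (0\<^sub>m q p) (map_mat (\<lambda>a. [:-a:]) Y) (char_poly_matrix B)"
    unfolding T by (rule eq_matI) (use Dmc Bc Yc in \<open>auto simp: char_poly_matrix_def\<close>)
  have "char_poly T = char_poly Dm * char_poly B"
    unfolding char_poly_def cpmT
    by (rule det_four_block_mat_upper_right_zero[OF char_poly_matrix_closed[OF Dmc] refl _ char_poly_matrix_closed[OF Bc]])
      (use Yc in auto)
  moreover have "char_poly Dm = (\<Prod>t\<in>{0..<q}. [:-\<gamma> (cl (g t)), 1:])"
  proof -
    have ut: "upper_triangular Dm" unfolding Dm_def upper_triangular_def by auto
    have "char_poly Dm = (\<Prod> a \<leftarrow> diag_mat Dm. [:- a, 1:])"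
      by (rule char_poly_upper_triangular[OF Dmc ut])
    also have "diag_mat Dm = map (\<lambda>t. \<gamma> (cl (g t))) [0..<q]"
      unfolding diag_mat_def Dm_def by auto
    finally show ?thesis by (simp add: prod.distinct_set_conv_list[symmetric] comp_def)
  qed
  moreover have "(\<Prod>t\<in>{0..<q}. [:-\<gamma> (cl (g t)), 1:]) = (\<Prod>c<p. [:-\<gamma> c, 1:]^(card {i. i<n \<and> cl i = c} - 1))"
  proof -
    have "(\<Prod>t\<in>{0..<q}. [:-\<gamma> (cl (g t)), 1:]) = (\<Prod>i\<in>NR. [:-\<gamma> (cl i), 1:])"
      using prod.reindex_bij_betw[OF g, of "\<lambda>i. [:-\<gamma> (cl i), 1:]"] by (simp add: atLeast0LessThan)
    also have "\<dots> = (\<Prod>c<p. \<Prod>i\<in>{i\<in>NR. cl i = c}. [:-\<gamma> (cl i), 1:])"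
      by (rule prod.group[symmetric]) (use cl NR_def in auto)
    also have "\<dots> = (\<Prod>c<p. [:-\<gamma> c, 1:]^(card {i. i<n \<and> cl i = c} - 1))"
    proof (rule prod.cong[OF refl])
      fix c assume c: "c \<in> {..<p}"
      have eq: "{i\<in>NR. cl i = c} = {i. i<n \<and> cl i = c} - {f c}"
        using c f unfolding NR_def R_def by auto
      have "(\<Prod>i\<in>{i\<in>NR. cl i = c}. [:-\<gamma> (cl i), 1:]) = (\<Prod>i\<in>{i\<in>NR. cl i = c}. [:-\<gamma> c, 1:])"
        by (rule prod.cong) auto
      also have "\<dots> = [:-\<gamma> c, 1:]^(card {i. i<n \<and> cl i = c} - 1)"
        unfolding eq using c f by (simp add: card_Diff_singleton)
      finally show "(\<Prod>i\<in>{i\<in>NR. cl i = c}. [:-\<gamma> (cl i), 1:]) = [:-\<gamma> c, 1:]^(card {i. i<n \<and> cl i = c} - 1)" .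
    qed
    finally show ?thesis .
  qed
  ultimately show ?thesis using char_poly_similar[OF sim] unfolding A_def B_def s_def
    by (simp add: mult.commute)
qed


definition cl3 :: "nat \<Rightarrow> nat \<Rightarrow> nat \<Rightarrow> nat" where
  "cl3 l m i = (if i < l then 0 else Suc ((i - l) div m))"
definition off3 :: "nat \<Rightarrow> nat \<Rightarrow> nat \<Rightarrow> nat" where
  "off3 l m c = (if c = 0 then 0 else l + (c - 1) * m)"

lemma gsize_complete[simp]: "gsize (complete_graph r) = r"
  by (simp add: gsize_def complete_graph_def)

lemma adj_complete: "adj (complete_graph r) a b \<longleftrightarrow> a < r \<and> b < r \<and> a \<noteq> b"
  by (simp add: adj_def gsize_def complete_graph_def)

lemma adj_star: "adj (star_graph k) i j \<longleftrightarrow> i < k \<and> j < k \<and> ((i = 0 \<and> j \<noteq> 0) \<or> (j = 0 \<and> i \<noteq> 0))"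
  by (auto simp add: adj_def gsize_def star_graph_def)

lemma gsize_nth: "i < k \<Longrightarrow> gsize ((complete_graph l # replicate (k - 1) (complete_graph m)) ! i) = (if i = 0 then l else m)"
  by (cases i) auto

lemma join_off3: "i \<le> k \<Longrightarrow> join_off (complete_graph l # replicate (k - 1) (complete_graph m)) i = off3 l m i"
proof (induction i)
  case 0
  then show ?case by (simp add: join_off_def off3_def)
next
  case (Suc i)
  then have "join_off (complete_graph l # replicate (k - 1) (complete_graph m)) (Suc i)
     = off3 l m i + (if i = 0 then l else m)"
    using gsize_nth[of i k l m] by (simp add: join_off_def)
  also have "\<dots> = off3 l m (Suc i)" by (cases i) (auto simp: off3_def)
  finally show ?case .
qed

lemma blk3: assumes "m \<ge> 1" shows "cl3 l m w = c \<longleftrightarrow> off3 l m c \<le> w \<and> w < off3 l m (Suc c)"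
proof (cases c)
  case 0
  then show ?thesis by (simp add: cl3_def off3_def)
next
  case (Suc j)
  have iff: "(w - l) div m = j \<longleftrightarrow> j * m \<le> w - l \<and> w - l < (Suc j) * m"
  proof
    assume h: "(w - l) div m = j"
    have "(w - l) div m * m \<le> w - l" by (rule div_times_less_eq_dividend)
    moreover have "w - l < m + (w - l) div m * m" using assms by (intro dividend_less_div_times) simp
    ultimately show "j * m \<le> w - l \<and> w - l < (Suc j) * m" using h by simp
  next
    assume "j * m \<le> w - l \<and> w - l < (Suc j) * m"
    then show "(w - l) div m = j" by (intro div_nat_eqI) (simp_all add: mult.commute)
  qed
  have "cl3 l m w = c \<longleftrightarrow> l \<le> w \<and> (w - l) div m = j" using Suc by (auto simp: cl3_def)
  also have "\<dots> \<longleftrightarrow> l \<le> w \<and> j * m \<le> w - l \<and> w - l < Suc j * m" using iff by simp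
  also have "\<dots> \<longleftrightarrow> off3 l m c \<le> w \<and> w < off3 l m (Suc c)" using Suc by (auto simp: off3_def)
  finally show ?thesis .
qed

lemma cl3_lt: assumes "m \<ge> 1" "k \<ge> 1" "w < l + (k - 1) * m" shows "cl3 l m w < k"
proof (cases "w < l")
  case False
  then have "w - l < (k - 1) * m" using assms by simp
  then have "(w - l) div m < k - 1" using assms by (simp add: div_less_iff_less_mult)
  then show ?thesis using False assms by (simp add: cl3_def)
qed (use assms in \<open>simp add: cl3_def\<close>)

lemma blk_arith: "(z::nat) \<le> v \<Longrightarrow> v < z + r \<Longrightarrow> z \<le> w \<Longrightarrow> w < z + r \<Longrightarrow>
  (v - z < r \<and> w - z < r \<and> v - z \<noteq> w - z) \<longleftrightarrow> v \<noteq> w"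
  by auto

lemma sqrt_2sq: "(x::real) \<ge> 0 \<Longrightarrow> sqrt (2 * x^2) = x * sqrt 2"
  by (simp add: real_sqrt_mult mult.commute)

definition alph :: "nat \<Rightarrow> nat \<Rightarrow> nat \<Rightarrow> nat \<Rightarrow> real" where
  "alph k l m c = (if c = 0 then (real (l + (k - 1) * m) - 1) * sqrt 2 else (real l + real m - 1) * sqrt 2)"
definition KK :: "nat \<Rightarrow> nat \<Rightarrow> nat \<Rightarrow> nat \<Rightarrow> nat \<Rightarrow> real" where
  "KK k l m c d = (if c = d then alph k l m c else if c = 0 \<or> d = 0 then
     sqrt ((real (l + (k - 1) * m) - 1)^2 + (real l + real m - 1)^2) else 0)"

lemma sqrt_sq2: "(x::real) \<ge> 0 \<Longrightarrow> sqrt (x^2 + x^2) = x * sqrt 2"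
proof -
  assume "x \<ge> 0"
  have "x^2 + x^2 = x^2 * 2" by simp
  then show ?thesis using \<open>x \<ge> 0\<close> by (simp add: real_sqrt_mult)
qed

context
  fixes k l m :: nat
  assumes k2: "k \<ge> 2" and l1: "l \<ge> 1" and m1: "m \<ge> 1"
begin

abbreviation "GsJ \<equiv> complete_graph l # replicate (k - 1) (complete_graph m)"
abbreviation "GamJ \<equiv> gen_join (star_graph k) GsJ"
abbreviation "nnJ \<equiv> l + (k - 1) * m"

lemma gsize_Gamma: "gsize GamJ = nnJ"
  using join_off3[of k k l m] k2 by (simp add: gsize_def gen_join_def off3_def)

lemma inblk: "i < k \<Longrightarrow> (join_off GsJ i \<le> v \<and> v < join_off GsJ (Suc i)) \<longleftrightarrow> cl3 l m v = i"
  using join_off3[of i k l m] join_off3[of "Suc i" k l m] blk3[OF m1, of l v i] by simp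

lemma adj_Gamma: "adj GamJ v w \<longleftrightarrow> v < nnJ \<and> w < nnJ \<and>
   ((cl3 l m v = cl3 l m w \<and> v \<noteq> w) \<or> (cl3 l m v \<noteq> cl3 l m w \<and> (cl3 l m v = 0 \<or> cl3 l m w = 0)))"
proof -
  define Q where "Q i j \<longleftrightarrow> ((i = j \<and> adj (GsJ ! i) (v - join_off GsJ i) (w - join_off GsJ i)) \<or> (i \<noteq> j \<and> adj (star_graph k) i j))" for i j
  have "snd GamJ v w \<longleftrightarrow> (\<exists>i<k. \<exists>j<k. (join_off GsJ i \<le> v \<and> v < join_off GsJ (Suc i)) \<and>
        (join_off GsJ j \<le> w \<and> w < join_off GsJ (Suc j)) \<and> Q i j)"
    unfolding gen_join_def Q_def using k2 by simp
  also have "\<dots> \<longleftrightarrow> (\<exists>i<k. \<exists>j<k. cl3 l m v = i \<and> cl3 l m w = j \<and> Q i j)"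
  proof -
    have "\<And>i j. i < k \<Longrightarrow> j < k \<Longrightarrow> ((join_off GsJ i \<le> v \<and> v < join_off GsJ (Suc i)) \<and>
        (join_off GsJ j \<le> w \<and> w < join_off GsJ (Suc j)) \<and> Q i j) = (cl3 l m v = i \<and> cl3 l m w = j \<and> Q i j)"
      using inblk by simp
    then show ?thesis by blast
  qed
  also have "\<dots> \<longleftrightarrow> cl3 l m v < k \<and> cl3 l m w < k \<and> Q (cl3 l m v) (cl3 l m w)" by blast
  finally have snd_eq: "snd GamJ v w \<longleftrightarrow> cl3 l m v < k \<and> cl3 l m w < k \<and> Q (cl3 l m v) (cl3 l m w)" .
  have adjblk: "adj (GsJ ! i) (v - join_off GsJ i) (w - join_off GsJ i) \<longleftrightarrow> v \<noteq> w"
    if "i < k" "cl3 l m v = i" "cl3 l m w = i" for i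
  proof -
    have "join_off GsJ i \<le> v" "v < join_off GsJ (Suc i)" "join_off GsJ i \<le> w" "w < join_off GsJ (Suc i)"
      using inblk[OF that(1)] that by auto
    moreover have "join_off GsJ (Suc i) = join_off GsJ i + gsize (GsJ ! i)"
      by (simp add: join_off_def)
    moreover have "GsJ ! i = complete_graph (if i = 0 then l else m)"
      using that(1) by (cases i) auto
    ultimately show ?thesis
      using blk_arith[of "join_off GsJ i" v "if i = 0 then l else m" w] by (simp add: adj_complete)
  qed
  show ?thesis
  proof (cases "v < nnJ \<and> w < nnJ")
    case False
    then show ?thesis unfolding adj_def[of GamJ] gsize_Gamma by auto
  next
    case True
    have cv: "cl3 l m v < k" and cw: "cl3 l m w < k" using cl3_lt[OF m1, where k=k and l=l] k2 True by auto
    have "Q (cl3 l m v) (cl3 l m w) \<longleftrightarrow> ((cl3 l m v = cl3 l m w \<and> v \<noteq> w) \<or> (cl3 l m v \<noteq> cl3 l m w \<and> (cl3 l m v = 0 \<or> cl3 l m w = 0)))"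
    proof (cases "cl3 l m v = cl3 l m w")
      case True
      then show ?thesis unfolding Q_def using adjblk[OF cv refl] by simp
    next
      case False
      then show ?thesis unfolding Q_def adj_star using cv cw by auto
    qed
    then show ?thesis unfolding adj_def[of GamJ] gsize_Gamma snd_eq using True cv cw by simp
  qed
qed

lemma blkset: assumes c: "c < k" shows "{w. w < nnJ \<and> cl3 l m w = c} = {off3 l m c..<off3 l m (Suc c)}"
proof -
  have cm: "c * m \<le> (k - 1) * m" using c by (intro mult_le_mono1) simp
  have le: "off3 l m (Suc c) \<le> nnJ" unfolding off3_def using cm by simp
  have "(w < nnJ \<and> cl3 l m w = c) \<longleftrightarrow> (off3 l m c \<le> w \<and> w < off3 l m (Suc c))" for w
  proof
    assume "w < nnJ \<and> cl3 l m w = c"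
    then show "off3 l m c \<le> w \<and> w < off3 l m (Suc c)" using blk3[OF m1, of l w c] by blast
  next
    assume h: "off3 l m c \<le> w \<and> w < off3 l m (Suc c)"
    then have "cl3 l m w = c" using blk3[OF m1, of l w c] by blast
    moreover have "w < nnJ" using h le by linarith
    ultimately show "w < nnJ \<and> cl3 l m w = c" by blast
  qed
  then show ?thesis
    by (intro Set.set_eqI) (simp only: mem_Collect_eq atLeastLessThan_iff)
qed

lemma card_blk: "c < k \<Longrightarrow> card {w. w < nnJ \<and> cl3 l m w = c} = (if c = 0 then l else m)"
proof -
  assume c: "c < k"
  have "card {w. w < nnJ \<and> cl3 l m w = c} = off3 l m (Suc c) - off3 l m c" using blkset[OF c] by simp
  also have "\<dots> = (if c = 0 then l else m)" by (cases c) (simp_all add: off3_def)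
  finally show ?thesis .
qed

lemma deg_Gamma: assumes v: "v < nnJ"
  shows "gdeg GamJ v = (if cl3 l m v = 0 then nnJ - 1 else l + m - 1)"
proof (cases "cl3 l m v = 0")
  case True
  have "{w. w < gsize GamJ \<and> adj GamJ v w} = {..<nnJ} - {v}"
    unfolding adj_Gamma gsize_Gamma using True v by auto
  then show ?thesis using True v by (simp add: gdeg_def)
next
  case False
  define c where "c = cl3 l m v"
  have c: "c < k" using cl3_lt[OF m1, where k=k and l=l and w=v] v k2 c_def by simp
  have "{w. w < gsize GamJ \<and> adj GamJ v w} = ({w. w < nnJ \<and> cl3 l m w = c} - {v}) \<union> {w. w < nnJ \<and> cl3 l m w = 0}"
    unfolding adj_Gamma gsize_Gamma using False v by (auto simp: c_def)
  moreover have "card (({w. w < nnJ \<and> cl3 l m w = c} - {v}) \<union> {w. w < nnJ \<and> cl3 l m w = 0}) = (m - 1) + l"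
  proof -
    have "card (({w. w < nnJ \<and> cl3 l m w = c} - {v}) \<union> {w. w < nnJ \<and> cl3 l m w = 0})
      = card ({w. w < nnJ \<and> cl3 l m w = c} - {v}) + card {w. w < nnJ \<and> cl3 l m w = 0}"
      by (rule card_Un_disjoint) (use False c_def in auto)
    also have "\<dots> = (m - 1) + l"
      using card_blk[OF c] card_blk[of 0] False c_def v k2 by (simp add: card_Diff_singleton)
    finally show ?thesis .
  qed
  ultimately show ?thesis using False m1 by (simp add: gdeg_def)
qed

lemma sombor_Gamma: "sombor_matrix GamJ = mat nnJ nnJ (\<lambda>(i,j). KK k l m (cl3 l m i) (cl3 l m j)
     + (if i = j then - alph k l m (cl3 l m i) else 0))"
proof (rule eq_matI)
  fix i j assume ij: "i < dim_row (mat nnJ nnJ (\<lambda>(i,j). KK k l m (cl3 l m i) (cl3 l m j)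
     + (if i = j then - alph k l m (cl3 l m i) else 0)))"
   "j < dim_col (mat nnJ nnJ (\<lambda>(i,j). KK k l m (cl3 l m i) (cl3 l m j)
     + (if i = j then - alph k l m (cl3 l m i) else 0)))"
  then have i: "i < nnJ" and j: "j < nnJ" by auto
  have rd: "real (gdeg GamJ v) = (if cl3 l m v = 0 then real nnJ - 1 else real l + real m - 1)" if "v < nnJ" for v
  proof -
    have n1: "1 \<le> nnJ" using l1 by simp
    have "real (nnJ - 1) = real nnJ - 1" using of_nat_diff[OF n1, where 'a=real] by simp
    moreover have "real (l + m - 1) = real l + real m - 1" using l1 by (simp add: of_nat_diff)
    ultimately show ?thesis unfolding deg_Gamma[OF that] by simp
  qed
  have r1: "real l \<ge> 1" using l1 by simp
  have r2: "real (k - 1) * real m \<ge> 0" by simp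
  have r3: "real nnJ = real l + real (k - 1) * real m" by simp
  have nn1: "real nnJ - 1 \<ge> 0" "real l + real m - 1 \<ge> 0" using r1 r2 r3 by linarith+
  show "sombor_matrix GamJ $$ (i,j) = mat nnJ nnJ (\<lambda>(i,j). KK k l m (cl3 l m i) (cl3 l m j)
     + (if i = j then - alph k l m (cl3 l m i) else 0)) $$ (i,j)"
  proof -
    have e: "sombor_matrix GamJ $$ (i,j) = (if adj GamJ i j then sqrt (real (gdeg GamJ i)^2 + real (gdeg GamJ j)^2) else 0)"
      using i j unfolding sombor_matrix_def gsize_Gamma by simp
    show ?thesis unfolding e adj_Gamma rd[OF i] rd[OF j] using i j nn1
      by (simp add: KK_def alph_def sqrt_2sq add.commute)
  qed
qed (unfold sombor_matrix_def gsize_Gamma, simp_all)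

end



lemma cpm2: "char_poly (mat 2 2 h :: real mat) = [:- h (0,0), 1:] * [:- h (1,1), 1:] - [:h (0,1) * h (1,0):]"
proof -
  have "char_poly_matrix (mat 2 2 h) = mat 2 2 (\<lambda>(i,j). (if i = j then [:0,1:] else 0) + [:- h (i,j):])"
    by (rule eq_matI) (auto simp: char_poly_matrix_def)
  then show ?thesis unfolding char_poly_def by (simp add: det_mat2 algebra_simps)
qed

lemma quad_factor:
  fixes a b u y1 y2 :: real
  assumes "y1 + y2 = a + b" "y1 * y2 = a * b - u"
  shows "[:- a, 1:] * [:- b, 1:] - [:u:] = [:- y1, 1:] * [:- y2, 1:]"
  using assms by (simp add: algebra_simps)

theorem corollary3p6:
  fixes k l m :: nat
  assumes "k \<ge> 2" "l \<ge> 1" "m \<ge> 1"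
  shows
    "let \<Gamma> = gen_join (star_graph k) (complete_graph l # replicate (k - 1) (complete_graph m));
         n = l + (k - 1) * m;
         d1 = real n - 1;
         d2 = real l + real m - 1;
         a = (real l - 1) * d1 * sqrt 2;
         b = (real m - 1) * d2 * sqrt 2;
         D = sqrt ((a - b)^2 + 4 * real l * real m * (real k - 1) * (d1^2 + d2^2));
         y1 = (a + b + D) / 2;
         y2 = (a + b - D) / 2
     in sombor_spectrum_is \<Gamma>
          (replicate_mset (l - 1) (- (real n - 1) * sqrt 2)
         + replicate_mset ((m - 1) * (k - 1)) (- (real l + real m - 1) * sqrt 2)
         + replicate_mset (k - 2) ((real m - 1) * (real l + real m - 1) * sqrt 2)
         + {# y1, y2 #})"
proof -
  note k2 = assms(1) and l1 = assms(2) and m1 = assms(3)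
  define nn where "nn = l + (k - 1) * m"
  define d1 where "d1 = real nn - 1"
  define d2 where "d2 = real l + real m - 1"
  define a where "a = (real l - 1) * d1 * sqrt 2"
  define b where "b = (real m - 1) * d2 * sqrt 2"
  define \<beta> where "\<beta> = sqrt (d1^2 + d2^2)"
  define D where "D = sqrt ((a - b)^2 + 4 * real l * real m * (real k - 1) * (d1^2 + d2^2))"
  define y1 where "y1 = (a + b + D) / 2"
  define y2 where "y2 = (a + b - D) / 2"
  define cl where "cl = cl3 l m"
  define s where "s d = card {w. w < nn \<and> cl w = d}" for d
  have s: "s c = (if c = 0 then l else m)" if "c < k" for c
    using card_blk[OF k2 l1 m1 that] unfolding s_def cl_def nn_def .
  have clk: "cl w < k" if "w < nn" for w using cl3_lt[OF m1, where k=k and l=l and w=w] that k2 unfolding cl_def nn_def by simp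
  have ne1: "\<exists>i<nn. cl i = c" if "c < k" for c
  proof -
    have "s c > 0" using s[OF that] l1 m1 by simp
    then obtain w where "w < nn" "cl w = c" unfolding s_def by (metis (mono_tags, lifting) Collect_empty_eq card_0_eq finite_Collect_conjI finite_Collect_less_nat less_not_refl2)
    then show ?thesis by blast
  qed
  define B1 where "B1 = mat k k (\<lambda>(c,d). KK k l m c d * real (s d) + (if c = d then - alph k l m c else 0))"
  have step1: "char_poly (sombor_matrix (gen_join (star_graph k) (complete_graph l # replicate (k - 1) (complete_graph m))))
     = char_poly B1 * (\<Prod>c<k. [:-(- alph k l m c), 1:]^(s c - 1))"
    unfolding sombor_Gamma[OF k2 l1 m1] B1_def s_def
    using quotient_char_poly[of nn cl k "KK k l m" "\<lambda>c. - alph k l m c"] clk ne1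
    unfolding cl_def nn_def by simp
  have al0: "alph k l m 0 = d1 * sqrt 2" unfolding alph_def d1_def nn_def by simp
  have al1: "alph k l m c = d2 * sqrt 2" if "c \<noteq> 0" for c unfolding alph_def d2_def using that by simp
  have prod1: "(\<Prod>c<k. [:-(- alph k l m c), 1:]^(s c - 1)) = [:d1 * sqrt 2, 1:]^(l-1) * [:d2 * sqrt 2, 1:]^((m-1)*(k-1))"
  proof -
    have kk: "k = Suc (k - 1)" using k2 by simp
    have "(\<Prod>c<k. [:-(- alph k l m c), 1:]^(s c - 1)) = [:-(- alph k l m 0), 1:]^(s 0 - 1) * (\<Prod>c<k-1. [:-(- alph k l m (Suc c)), 1:]^(s (Suc c) - 1))"
      by (subst kk, subst prod.lessThan_Suc_shift) simp
    also have "(\<Prod>c<k-1. [:-(- alph k l m (Suc c)), 1:]^(s (Suc c) - 1)) = (\<Prod>c<k-1. [:d2 * sqrt 2, 1:]^(m - 1))"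
      by (rule prod.cong) (use s al1 in auto)
    also have "\<dots> = [:d2 * sqrt 2, 1:]^((m-1)*(k-1))" by (simp add: power_mult)
    finally show ?thesis using s[of 0] k2 al0 by simp
  qed
  define K2 where "K2 i j = (if i = 0 then (if j = 0 then a else \<beta> * real m) else (if j = 0 then \<beta> * real l else 0))" for i j :: nat
  define g2 where "g2 i = (if i = 0 then 0 else b)" for i :: nat
  define cl2 where "cl2 c = (if c = 0 then 0 else 1::nat)" for c :: nat
  have B1eq: "B1 = mat k k (\<lambda>(c,d). K2 (cl2 c) (cl2 d) + (if c = d then g2 (cl2 c) else 0))"
  proof (rule eq_matI)
    fix c d assume "c < dim_row (mat k k (\<lambda>(c,d). K2 (cl2 c) (cl2 d) + (if c = d then g2 (cl2 c) else 0)))"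
      "d < dim_col (mat k k (\<lambda>(c,d). K2 (cl2 c) (cl2 d) + (if c = d then g2 (cl2 c) else 0)))"
    then have c: "c < k" and d: "d < k" by auto
    have bb: "sqrt ((real (l + (k - 1) * m) - 1)^2 + (real l + real m - 1)^2) = \<beta>"
      unfolding \<beta>_def d1_def d2_def nn_def by simp
    show "B1 $$ (c,d) = mat k k (\<lambda>(c,d). K2 (cl2 c) (cl2 d) + (if c = d then g2 (cl2 c) else 0)) $$ (c,d)"
      using c d s[OF d] al0 al1 unfolding B1_def KK_def bb
      by (auto simp: K2_def g2_def cl2_def a_def b_def algebra_simps)
  qed (simp_all add: B1_def)
  have s2: "card {i. i < k \<and> cl2 i = e} = (if e = 0 then 1 else k - 1)" if "e < 2" for e
  proof (cases "e = 0")
    case True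
    then have "{i. i < k \<and> cl2 i = e} = {0}" using k2 by (auto simp: cl2_def)
    then show ?thesis using True by simp
  next
    case False
    then have "{i. i < k \<and> cl2 i = e} = {1..<k}" using that by (auto simp: cl2_def)
    then show ?thesis using False by simp
  qed
  have step2: "char_poly B1 = char_poly (mat 2 2 (\<lambda>(c,d). K2 c d * real (card {i. i<k \<and> cl2 i = d}) + (if c = d then g2 c else 0)))
     * (\<Prod>c<2. [:-g2 c, 1:]^(card {i. i<k \<and> cl2 i = c} - 1))"
  proof -
    have cl2lt: "cl2 i < 2" if "i < k" for i by (simp add: cl2_def)
    have ne2: "\<exists>i<k. cl2 i = c" if "c < 2" for c
    proof (cases "c = 0")
      case True
      have "0 < k \<and> cl2 0 = c" using k2 True by (simp add: cl2_def)
      then show ?thesis by blast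
    next
      case False
      then have "c = 1" using that by simp
      then have "1 < k \<and> cl2 1 = c" using k2 by (simp add: cl2_def)
      then show ?thesis by blast
    qed
    show ?thesis unfolding B1eq by (rule quotient_char_poly[OF cl2lt ne2])
  qed
  have prod2: "(\<Prod>c<2. [:-g2 c, 1:]^(card {i. i<k \<and> cl2 i = c} - 1)) = [:-b, 1:]^(k-2)"
    using s2[of 0] s2[of 1] by (simp add: numeral_2_eq_2 g2_def)
  have cp2: "char_poly (mat 2 2 (\<lambda>(c,d). K2 c d * real (card {i. i<k \<and> cl2 i = d}) + (if c = d then g2 c else 0)))
     = [:- y1, 1:] * [:- y2, 1:]"
  proof -
    have "char_poly (mat 2 2 (\<lambda>(c,d). K2 c d * real (card {i. i<k \<and> cl2 i = d}) + (if c = d then g2 c else 0)))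
      = [:- a, 1:] * [:- b, 1:] - [:(\<beta> * real m * real (k - 1)) * (\<beta> * real l):]"
      unfolding cpm2 using s2[of 0] s2[of 1] by (simp add: K2_def g2_def)
    also have "\<dots> = [:- y1, 1:] * [:- y2, 1:]"
    proof (rule quad_factor)
      show "y1 + y2 = a + b" unfolding y1_def y2_def by (simp add: field_simps)
      have Dsq: "D^2 = (a - b)^2 + 4 * real l * real m * (real k - 1) * (d1^2 + d2^2)"
        unfolding D_def using k2 by (intro real_sqrt_pow2) (simp add: add_nonneg_nonneg mult_nonneg_nonneg)
      have bsq: "\<beta>^2 = d1^2 + d2^2" unfolding \<beta>_def by (simp add: add_nonneg_nonneg)
      have "y1 * y2 = ((a+b)^2 - D^2) / 4" unfolding y1_def y2_def by (simp add: field_simps power2_eq_square)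
      also have "\<dots> = a * b - \<beta>^2 * real m * (real k - 1) * real l" unfolding Dsq bsq by (simp add: field_simps power2_eq_square)
      also have "\<dots> = a * b - (\<beta> * real m * real (k - 1)) * (\<beta> * real l)" using k2 by (simp add: of_nat_diff power2_eq_square)
      finally show "y1 * y2 = a * b - (\<beta> * real m * real (k - 1)) * (\<beta> * real l)" .
    qed
    finally show ?thesis .
  qed
  have main: "char_poly (sombor_matrix (gen_join (star_graph k) (complete_graph l # replicate (k - 1) (complete_graph m))))
    = [:d1 * sqrt 2, 1:]^(l-1) * [:d2 * sqrt 2, 1:]^((m-1)*(k-1)) * [:-b, 1:]^(k-2) * ([:- y1, 1:] * [:- y2, 1:])"
    unfolding step1 step2 prod1 prod2 cp2 by (simp only: ac_simps)
  have e1: "[:d1 * sqrt 2, 1:] = [:- (- d1 * sqrt 2), 1:]" by simp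
  have e2: "[:d2 * sqrt 2, 1:] = [:- (- d2 * sqrt 2), 1:]" by simp
  have prodM: "(\<Prod>x\<in>#(replicate_mset (l - 1) (- d1 * sqrt 2) + replicate_mset ((m - 1) * (k - 1)) (- d2 * sqrt 2)
      + replicate_mset (k - 2) b + {#y1, y2#}). [:- x, 1:])
     = [:- (- d1 * sqrt 2), 1:]^(l-1) * [:- (- d2 * sqrt 2), 1:]^((m-1)*(k-1)) * [:-b, 1:]^(k-2) * ([:- y1, 1:] * [:- y2, 1:])"
    by (simp only: image_mset_union image_replicate_mset image_mset_add_mset image_mset_empty prod_mset_Un
        prod_mset_replicate_mset prod_mset.add_mset prod_mset_empty mult_1_right)
  show ?thesis
    unfolding Let_def sombor_spectrum_is_def
    unfolding nn_def[symmetric]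
    unfolding d1_def[symmetric]
    unfolding d2_def[symmetric]
    unfolding a_def[symmetric]
    unfolding b_def[symmetric]
    unfolding D_def[symmetric]
    unfolding y1_def[symmetric] y2_def[symmetric]
    unfolding prodM main e1 e2 ..
qed


end
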